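(* Let $G$ be a finite nonabelian group. Then $U(G)\le G'\cap Z(G)\le G'Z(G)\le V(G)$.
   Context: For a normal subgroup $H$ of $G$, $\mathrm{Irr}(G\mid H)$ is the set of $\chi\in\mathrm{Irr}(G)$ with $H\not\le\ker(\chi)$, and $V(G\mid H)$ is the subgroup generated by all $g\in G$ such that $\chi(g)\ne0$ for some $\chi\in\mathrm{Irr}(G\mid H)$. For a normal subgroup $N$, $U(G\mid N)$ is the product of all normal subgroups $H$ of $G$ with $V(G\mid H)\le N$, and $U(G)=U(G\mid Z(G))$. $V(G)$ is the subgroup generated by all $g\in G$ such that $\chi(g)\neq 0$ for some nonlinear $\chi\in\mathrm{Irr}(G)$ (equivalently $V(G)=V(G\mid G')$). *)

theory Defs
  imports "HOL-Algebra.Algebra" "Jordan_Normal_Form.Matrix"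
begin

definition is_rep :: "('a, 'b) monoid_scheme \<Rightarrow> nat \<Rightarrow> ('a \<Rightarrow> complex mat) \<Rightarrow> bool" where
  "is_rep G n \<rho> \<longleftrightarrow>
     (\<forall>g \<in> carrier G. \<rho> g \<in> carrier_mat n n) \<and>
     (\<forall>g \<in> carrier G. \<forall>h \<in> carrier G. \<rho> (g \<otimes>\<^bsub>G\<^esub> h) = \<rho> g * \<rho> h) \<and>
     \<rho> \<one>\<^bsub>G\<^esub> = 1\<^sub>m n"

definition invariant_subspace :: "('a, 'b) monoid_scheme \<Rightarrow> nat \<Rightarrow> ('a \<Rightarrow> complex mat) \<Rightarrow> complex vec set \<Rightarrow> bool" where
  "invariant_subspace G n \<rho> W \<longleftrightarrow>
     W \<subseteq> carrier_vec n \<and> 0\<^sub>v n \<in> W \<and>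
     (\<forall>v \<in> W. \<forall>w \<in> W. v + w \<in> W) \<and>
     (\<forall>c. \<forall>v \<in> W. c \<cdot>\<^sub>v v \<in> W) \<and>
     (\<forall>g \<in> carrier G. \<forall>v \<in> W. \<rho> g *\<^sub>v v \<in> W)"

definition irr_rep :: "('a, 'b) monoid_scheme \<Rightarrow> nat \<Rightarrow> ('a \<Rightarrow> complex mat) \<Rightarrow> bool" where
  "irr_rep G n \<rho> \<longleftrightarrow> is_rep G n \<rho> \<and> n > 0 \<and>
     (\<forall>W. invariant_subspace G n \<rho> W \<longrightarrow> W = {0\<^sub>v n} \<or> W = carrier_vec n)"

definition Irr :: "('a, 'b) monoid_scheme \<Rightarrow> ('a \<Rightarrow> complex) set" where
  "Irr G = {\<chi>. \<exists>n \<rho>. irr_rep G n \<rho> \<and>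
                 \<chi> = (\<lambda>g. if g \<in> carrier G then (\<Sum>i<n. \<rho> g $$ (i, i)) else 0)}"

definition char_kernel :: "('a, 'b) monoid_scheme \<Rightarrow> ('a \<Rightarrow> complex) \<Rightarrow> 'a set" where
  "char_kernel G \<chi> = {g \<in> carrier G. \<chi> g = \<chi> \<one>\<^bsub>G\<^esub>}"

definition Irr_rel :: "('a, 'b) monoid_scheme \<Rightarrow> 'a set \<Rightarrow> ('a \<Rightarrow> complex) set" where
  "Irr_rel G H = {\<chi> \<in> Irr G. \<not> H \<subseteq> char_kernel G \<chi>}"

definition V_rel :: "('a, 'b) monoid_scheme \<Rightarrow> 'a set \<Rightarrow> 'a set" where
  "V_rel G H = generate G {g \<in> carrier G. \<exists>\<chi> \<in> Irr_rel G H. \<chi> g \<noteq> 0}"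

text \<open>U(G | N): product (= subgroup generated by the union) of all normal subgroups H with V(G|H) <= N.\<close>
definition U_rel :: "('a, 'b) monoid_scheme \<Rightarrow> 'a set \<Rightarrow> 'a set" where
  "U_rel G N = generate G (\<Union> {H. H \<lhd> G \<and> V_rel G H \<subseteq> N})"

definition center :: "('a, 'b) monoid_scheme \<Rightarrow> 'a set" where
  "center G = {z \<in> carrier G. \<forall>g \<in> carrier G. z \<otimes>\<^bsub>G\<^esub> g = g \<otimes>\<^bsub>G\<^esub> z}"

definition U_grp :: "('a, 'b) monoid_scheme \<Rightarrow> 'a set" where
  "U_grp G = U_rel G (center G)"

definition V_grp :: "('a, 'b) monoid_scheme \<Rightarrow> 'a set" where
  "V_grp G = generate G {g \<in> carrier G. \<exists>\<chi> \<in> Irr G. \<chi> \<one>\<^bsub>G\<^esub> \<noteq> 1 \<and> \<chi> g \<noteq> 0}"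

end

theory Submission
  imports Defs "Jordan_Normal_Form.DL_Rank" "Jordan_Normal_Form.Char_Poly"
begin

context vec_space begin

lemma max_li_span:
  assumes Y: "finite Y" "Y \<subseteq> carrier_vec n"
    and M: "maximal B (\<lambda>T. T \<subseteq> Y \<and> lin_indpt T)"
  shows "Y \<subseteq> span B"
proof
  have BX: "B \<subseteq> Y" "lin_indpt B" using M unfolding maximal_def by auto
  fix s assume s: "s \<in> Y"
  show "s \<in> span B"
  proof (rule ccontr)
    assume ns: "s \<notin> span B"
    have Bc: "B \<subseteq> carrier_vec n" using BX Y by auto
    have sB: "s \<notin> B" using ns span_mem[OF Bc] by auto
    have "lin_indpt (B \<union> {s})"
      using lin_dep_iff_in_span[OF Bc BX(2) _ sB] ns s Y by auto
    moreover have "B \<union> {s} \<subseteq> Y" using BX s by auto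
    ultimately have "B \<union> {s} = B" using M unfolding maximal_def by blast
    with sB show False by auto
  qed
qed

lemma basis_ext:
  assumes S: "finite S" "S \<subseteq> carrier_vec n"
  and W: "submodule class_ring W V" and SW: "S \<subseteq> W" and Wne: "W \<noteq> carrier_vec n"
  and w: "w \<in> S" "w \<noteq> 0\<^sub>v n"
  shows "\<exists>bs cs. set bs \<subseteq> S \<and> S \<subseteq> span (set bs) \<and> distinct (bs @ cs) \<and> length (bs @ cs) = n
     \<and> set (bs @ cs) \<subseteq> carrier_vec n \<and> 0 < length bs \<and> length bs < n \<and> lin_indpt (set (bs @ cs))"
proof -
  have li0: "lin_indpt {}" by (simp add: lin_dep_def)
  obtain B where B: "finite B" "maximal B (\<lambda>T. T \<subseteq> S \<and> lin_indpt T)"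
    using maximal_exists_superset[of S "\<lambda>T. T \<subseteq> S \<and> lin_indpt T" "{}"] S(1) li0 by auto
  have BS: "B \<subseteq> S" "lin_indpt B" using B unfolding maximal_def by auto
  have SB: "S \<subseteq> span B" by (rule max_li_span[OF S B(2)])
  define U where "U = set (unit_vecs n :: 'a vec list)"
  have Uc: "U \<subseteq> carrier_vec n" unfolding U_def using unit_vecs_carrier by auto
  have fSU: "finite (S \<union> U)" using S unfolding U_def by auto
  obtain C where C: "finite C" "maximal C (\<lambda>T. T \<subseteq> S \<union> U \<and> lin_indpt T)" "B \<subseteq> C"
    using maximal_exists_superset[of "S \<union> U" "\<lambda>T. T \<subseteq> S \<union> U \<and> lin_indpt T" B] fSU BS by auto
  have CSU: "C \<subseteq> S \<union> U" "lin_indpt C" using C unfolding maximal_def by auto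
  have Cc: "C \<subseteq> carrier_vec n" using CSU S Uc by auto
  have "S \<union> U \<subseteq> span C" by (rule max_li_span[OF fSU _ C(2)], insert S Uc, auto)
  hence "span U \<subseteq> span C"
    using span_is_subset[OF _ span_is_submodule[OF Cc]] by auto
  hence spC: "span C = carrier_vec n" unfolding U_def span_unit_vecs_is_carrier
    using span_closed[OF Cc] by auto
  have basC: "basis C" unfolding basis_def using spC CSU Cc by auto
  have cardC: "card C = n" using dim_basis[OF C(1) basC] dim_is_n by simp
  have Wc: "W \<subseteq> carrier_vec n" using W unfolding submodule_def by auto
  have spBW: "span B \<subseteq> W" using span_is_subset[OF _ W] BS SW by auto
  have BC: "B \<noteq> C"
  proof
    assume "B = C"
    with spBW spC Wc Wne show False by auto
  qed
  have cardB: "card B < n" using cardC C BC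
    by (metis card_subset_eq psubsetI psubset_card_mono)
  have Bne: "B \<noteq> {}"
  proof
    assume "B = {}"
    with SB w span_empty show False by auto
  qed
  obtain bs where bs: "set bs = B" "distinct bs" using finite_distinct_list[OF B(1)] by auto
  obtain cs where cs: "set cs = C - B" "distinct cs" using finite_distinct_list[of "C - B"] C(1) by auto
  have setbc: "set (bs @ cs) = C" using bs cs C(3) by auto
  have dist: "distinct (bs @ cs)" using bs cs by auto
  have len: "length (bs @ cs) = n" using distinct_card[OF dist] setbc cardC by simp
  show ?thesis
    apply (rule exI[of _ bs], rule exI[of _ cs])
    using bs BS SB dist len setbc Cc CSU cardB Bne distinct_card[OF bs(2)]
    by auto
qed

lemma span_coords:
  assumes v: "v \<in> span (set bs)" and bc: "set (bs @ cs) \<subseteq> carrier_vec n"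
    and len: "length (bs @ cs) = n"
  shows "\<exists>c\<in>carrier_vec n. mat_of_cols n (bs @ cs) *\<^sub>v c = v \<and> (\<forall>l. length bs \<le> l \<longrightarrow> l < n \<longrightarrow> c $ l = 0)"
proof -
  have bsc: "set bs \<subseteq> carrier_vec n" using bc by auto
  obtain a where a: "lincomb a (set bs) = v" using finite_in_span[OF _ bsc v] by auto
  define f where "f = (\<lambda>i. if \<exists>j<i. bs ! i = bs ! j then 0 else a (bs ! i))"
  have "v = lincomb_list f bs" unfolding a[symmetric] f_def by (rule lincomb_as_lincomb_list[OF bsc])
  also have "\<dots> = mat_of_cols n bs *\<^sub>v vec (length bs) f"
    by (rule lincomb_list_as_mat_mult, insert bsc, auto)
  finally have v2: "v = mat_of_cols n bs *\<^sub>v vec (length bs) f" .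
  define c where "c = vec n (\<lambda>l. if l < length bs then f l else 0)"
  have "mat_of_cols n (bs @ cs) *\<^sub>v c = mat_of_cols n bs *\<^sub>v vec (length bs) f"
  proof (rule eq_vecI)
    fix i assume "i < dim_vec (mat_of_cols n bs *\<^sub>v vec (length bs) f)"
    hence i: "i < n" by simp
    have "(mat_of_cols n (bs @ cs) *\<^sub>v c) $ i = (\<Sum>l<n. mat_of_cols n (bs @ cs) $$ (i,l) * c $ l)"
      using i len by (auto simp: scalar_prod_def c_def row_def lessThan_atLeast0 intro!: sum.cong)
    also have "\<dots> = (\<Sum>l<length bs. mat_of_cols n (bs @ cs) $$ (i,l) * c $ l)"
      by (rule sum.mono_neutral_right, insert len, auto simp: c_def)
    also have "\<dots> = (\<Sum>l<length bs. mat_of_cols n bs $$ (i,l) * vec (length bs) f $ l)"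
      by (rule sum.cong, insert i len, auto simp: c_def mat_of_cols_index nth_append)
    also have "\<dots> = (mat_of_cols n bs *\<^sub>v vec (length bs) f) $ i"
      using i by (simp add: scalar_prod_def row_def lessThan_atLeast0)
    finally show "(mat_of_cols n (bs @ cs) *\<^sub>v c) $ i = (mat_of_cols n bs *\<^sub>v vec (length bs) f) $ i" .
  qed simp
  thus ?thesis using v2 by (intro bexI[of _ c], auto simp: c_def)
qed

lemma block_basis:
  fixes W :: "'a vec set"
  assumes S: "finite S" "S \<subseteq> carrier_vec n"
  and Wc: "W \<subseteq> carrier_vec n" and W0: "0\<^sub>v n \<in> W"
  and Wadd: "\<forall>v\<in>W. \<forall>u\<in>W. v + u \<in> W" and Wsm: "\<forall>c. \<forall>v\<in>W. c \<cdot>\<^sub>v v \<in> W"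
  and SW: "S \<subseteq> W" and Wne: "W \<noteq> carrier_vec n"
  and w: "w \<in> S" "w \<noteq> 0\<^sub>v n"
  shows "\<exists>j T Ti. 0 < j \<and> j < n \<and> T \<in> carrier_mat n n \<and> Ti \<in> carrier_mat n n \<and>
     T * Ti = 1\<^sub>m n \<and> Ti * T = 1\<^sub>m n \<and> (\<forall>i<j. col T i \<in> S) \<and>
     (\<forall>s\<in>S. \<exists>c\<in>carrier_vec n. T *\<^sub>v c = s \<and> (\<forall>l. j \<le> l \<longrightarrow> l < n \<longrightarrow> c $ l = 0))"
proof -
  have md: "Module.module (class_ring :: 'a ring) V" by (rule vec_module)
  have subm: "submodule class_ring W V"
    unfolding submodule_def using Wc W0 Wadd Wsm md by auto
  obtain bs cs where bc: "set bs \<subseteq> S" "S \<subseteq> span (set bs)" "distinct (bs @ cs)" "length (bs @ cs) = n"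
     "set (bs @ cs) \<subseteq> carrier_vec n" "0 < length bs" "length bs < n" "lin_indpt (set (bs @ cs))"
    using basis_ext[OF S subm SW Wne w] by blast
  define T where "T = mat_of_cols n (bs @ cs)"
  have Tc: "T \<in> carrier_mat n n" unfolding T_def using bc(4) mat_of_cols_carrier(1)[of n "bs @ cs"] by simp
  have colsT: "cols T = bs @ cs" unfolding T_def using bc(5) by simp
  have "rank T = n" using lin_indpt_full_rank[OF Tc] colsT bc(3,8) by simp
  hence "det T \<noteq> 0" using det_rank_iff[OF Tc] by simp
  from det_non_zero_imp_unit[OF Tc this, of "()"]
  obtain Ti where Ti: "Ti \<in> carrier_mat n n" "T * Ti = 1\<^sub>m n" "Ti * T = 1\<^sub>m n"
    unfolding Units_def ring_mat_def by auto
  have cols: "\<forall>i<length bs. col T i \<in> S"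
  proof (intro allI impI)
    fix i assume i: "i < length bs"
    have "col T i = (bs @ cs) ! i" unfolding T_def
      by (rule col_mat_of_cols, insert i bc(5), auto simp: nth_append)
    also have "\<dots> = bs ! i" using i by (simp add: nth_append)
    finally show "col T i \<in> S" using bc(1) i by auto
  qed
  have coords: "\<forall>s\<in>S. \<exists>c\<in>carrier_vec n. T *\<^sub>v c = s \<and> (\<forall>l. length bs \<le> l \<longrightarrow> l < n \<longrightarrow> c $ l = 0)"
    using span_coords[OF _ bc(5) bc(4)] bc(2) unfolding T_def by blast
  show ?thesis
    by (rule exI[of _ "length bs"], rule exI[of _ T], rule exI[of _ Ti], insert bc Tc Ti cols coords, auto)
qed

end

definition tr :: "nat \<Rightarrow> ('a \<Rightarrow> complex mat) \<Rightarrow> 'a \<Rightarrow> complex" where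
  "tr n \<rho> g = (\<Sum>i<n. \<rho> g $$ (i, i))"

lemma mult_entry:
  assumes "A \<in> carrier_mat k m" "B \<in> carrier_mat m p" "a < k" "b < p"
  shows "(A * B) $$ (a, b) = (\<Sum>l<m. A $$ (a, l) * B $$ (l, b))"
  using assms by (simp add: scalar_prod_def row_def col_def lessThan_atLeast0)

lemma sum_split:
  assumes "j \<le> (k::nat)"
  shows "(\<Sum>l<k. f l) = (\<Sum>l<j. f l) + (\<Sum>l<k-j. f (l + j))"
proof -
  have "{..<k} = {..<j} \<union> {j..<k}" using assms by auto
  hence "(\<Sum>l<k. f l) = sum f ({..<j} \<union> {j..<k})" by simp
  also have "\<dots> = (\<Sum>l<j. f l) + (\<Sum>l\<in>{j..<k}. f l)"
    by (rule sum.union_disjoint) auto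
  also have "(\<Sum>l\<in>{j..<k}. f l) = (\<Sum>l<k-j. f (l + j))"
  proof -
    have "{j..<k} = {0+j..<(k-j)+j}" using assms by auto
    thus ?thesis by (simp only: sum.shift_bounds_nat_ivl lessThan_atLeast0)
  qed
  finally show ?thesis .
qed

lemma trace_comm:
  fixes P Q :: "'a :: comm_semiring_1 mat"
  assumes "P \<in> carrier_mat k m" "Q \<in> carrier_mat m k"
  shows "(\<Sum>i<k. (P * Q) $$ (i, i)) = (\<Sum>l<m. (Q * P) $$ (l, l))"
proof -
  have "(\<Sum>i<k. (P * Q) $$ (i, i)) = (\<Sum>i<k. \<Sum>l<m. P $$ (i, l) * Q $$ (l, i))"
    using assms by (intro sum.cong refl mult_entry) auto
  also have "\<dots> = (\<Sum>l<m. \<Sum>i<k. Q $$ (l, i) * P $$ (i, l))"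
    by (subst sum.swap) (simp add: mult.commute)
  also have "\<dots> = (\<Sum>l<m. (Q * P) $$ (l, l))"
    using assms by (intro sum.cong refl) (auto simp: scalar_prod_def row_def col_def lessThan_atLeast0)
  finally show ?thesis .
qed

lemma trace_sim:
  fixes A T Ti :: "'a :: comm_ring_1 mat"
  assumes A: "A \<in> carrier_mat k k" and T: "T \<in> carrier_mat k k" "Ti \<in> carrier_mat k k"
    and inv: "T * Ti = 1\<^sub>m k"
  shows "(\<Sum>i<k. (Ti * A * T) $$ (i, i)) = (\<Sum>i<k. A $$ (i, i))"
proof -
  have "(\<Sum>i<k. (Ti * A * T) $$ (i, i)) = (\<Sum>i<k. (T * (Ti * A)) $$ (i, i))"
    using trace_comm[of "Ti * A" k k T] A T by simp
  also have "T * (Ti * A) = A" using A T inv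
    by (metis assoc_mult_mat left_mult_one_mat)
  finally show ?thesis .
qed

context
  fixes G :: "('g, 'b) monoid_scheme" and k j :: nat and M :: "'g \<Rightarrow> complex mat"
  assumes grp: "group G" and rep: "is_rep G k M" and jk: "j \<le> k"
    and Z: "\<forall>x\<in>carrier G. \<forall>l i. j \<le> l \<longrightarrow> l < k \<longrightarrow> i < j \<longrightarrow> M x $$ (l, i) = 0"
begin

definition "blkB x = mat j j (\<lambda>(a, b). M x $$ (a, b))"
definition "blkD x = mat (k - j) (k - j) (\<lambda>(a, b). M x $$ (a + j, b + j))"

lemma Mc: "x \<in> carrier G \<Longrightarrow> M x \<in> carrier_mat k k"
  using rep unfolding is_rep_def by auto

lemma Mmult: "x \<in> carrier G \<Longrightarrow> y \<in> carrier G \<Longrightarrow> M (x \<otimes>\<^bsub>G\<^esub> y) = M x * M y"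
  using rep unfolding is_rep_def by auto

lemma M1: "M \<one>\<^bsub>G\<^esub> = 1\<^sub>m k"
  using rep unfolding is_rep_def by auto

lemma blkB_rep: "is_rep G j blkB"
  unfolding is_rep_def
proof (intro conjI ballI)
  fix x y assume x: "x \<in> carrier G" and y: "y \<in> carrier G"
  show "blkB (x \<otimes>\<^bsub>G\<^esub> y) = blkB x * blkB y"
  proof (rule eq_matI)
    fix a b assume a: "a < dim_row (blkB x * blkB y)" and b: "b < dim_col (blkB x * blkB y)"
    hence a: "a < j" and b: "b < j" by (auto simp: blkB_def)
    have "blkB (x \<otimes>\<^bsub>G\<^esub> y) $$ (a, b) = (M x * M y) $$ (a, b)"
      using a b by (simp add: blkB_def Mmult[OF x y])
    also have "\<dots> = (\<Sum>l<k. M x $$ (a, l) * M y $$ (l, b))"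
      using a b jk by (intro mult_entry[OF Mc[OF x] Mc[OF y]], auto)
    also have "\<dots> = (\<Sum>l<j. M x $$ (a, l) * M y $$ (l, b)) + (\<Sum>l<k-j. M x $$ (a, l+j) * M y $$ (l+j, b))"
      by (rule sum_split[OF jk])
    also have "(\<Sum>l<k-j. M x $$ (a, l+j) * M y $$ (l+j, b)) = 0"
      using Z y b by (intro sum.neutral, auto)
    also have "(\<Sum>l<j. M x $$ (a, l) * M y $$ (l, b)) = (blkB x * blkB y) $$ (a, b)"
      using a b by (subst mult_entry[of _ j j _ j], auto simp: blkB_def)
    finally show "blkB (x \<otimes>\<^bsub>G\<^esub> y) $$ (a, b) = (blkB x * blkB y) $$ (a, b)" by simp
  qed (auto simp: blkB_def)
qed (use jk in \<open>auto simp: blkB_def M1 intro!: eq_matI\<close>)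

lemma blkD_rep: "is_rep G (k - j) blkD"
  unfolding is_rep_def
proof (intro conjI ballI)
  fix x y assume x: "x \<in> carrier G" and y: "y \<in> carrier G"
  show "blkD (x \<otimes>\<^bsub>G\<^esub> y) = blkD x * blkD y"
  proof (rule eq_matI)
    fix a b assume a: "a < dim_row (blkD x * blkD y)" and b: "b < dim_col (blkD x * blkD y)"
    hence a: "a < k - j" and b: "b < k - j" by (auto simp: blkD_def)
    have "blkD (x \<otimes>\<^bsub>G\<^esub> y) $$ (a, b) = (M x * M y) $$ (a + j, b + j)"
      using a b by (simp add: blkD_def Mmult[OF x y])
    also have "\<dots> = (\<Sum>l<k. M x $$ (a + j, l) * M y $$ (l, b + j))"
      using a b jk by (intro mult_entry[OF Mc[OF x] Mc[OF y]], auto)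
    also have "\<dots> = (\<Sum>l<j. M x $$ (a + j, l) * M y $$ (l, b + j)) + (\<Sum>l<k-j. M x $$ (a + j, l+j) * M y $$ (l+j, b + j))"
      by (rule sum_split[OF jk])
    also have "(\<Sum>l<j. M x $$ (a + j, l) * M y $$ (l, b + j)) = 0"
      using Z x a by (intro sum.neutral, auto)
    also have "(\<Sum>l<k-j. M x $$ (a + j, l+j) * M y $$ (l+j, b + j)) = (blkD x * blkD y) $$ (a, b)"
      using a b by (subst mult_entry[of _ "k-j" "k-j" _ "k-j"], auto simp: blkD_def)
    finally show "blkD (x \<otimes>\<^bsub>G\<^esub> y) $$ (a, b) = (blkD x * blkD y) $$ (a, b)" by simp
  qed (auto simp: blkD_def)
qed (use jk in \<open>auto simp: blkD_def M1 intro!: eq_matI\<close>)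

lemma blk_tr: "tr k M x = tr j blkB x + tr (k - j) blkD x"
  unfolding tr_def using sum_split[OF jk, of "\<lambda>i. M x $$ (i, i)"]
  by (simp add: blkB_def blkD_def)

lemma blk_one: "M x = 1\<^sub>m k \<Longrightarrow> blkB x = 1\<^sub>m j \<and> blkD x = 1\<^sub>m (k - j)"
  using jk by (auto simp: blkB_def blkD_def intro!: eq_matI)

lemma blk_fix:
  assumes u: "u \<in> carrier_vec k" "u \<noteq> 0\<^sub>v k" and fx: "\<forall>x\<in>carrier G. M x *\<^sub>v u = u"
  shows "(\<exists>v\<in>carrier_vec j. v \<noteq> 0\<^sub>v j \<and> (\<forall>x\<in>carrier G. blkB x *\<^sub>v v = v)) \<or>
         (\<exists>v\<in>carrier_vec (k - j). v \<noteq> 0\<^sub>v (k - j) \<and> (\<forall>x\<in>carrier G. blkD x *\<^sub>v v = v))"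
proof (cases "\<exists>l. j \<le> l \<and> l < k \<and> u $ l \<noteq> 0")
  case True
  then obtain l where l: "j \<le> l" "l < k" "u $ l \<noteq> 0" by auto
  define v where "v = vec (k - j) (\<lambda>a. u $ (a + j))"
  have "v \<noteq> 0\<^sub>v (k - j)"
  proof
    assume "v = 0\<^sub>v (k - j)"
    hence "v $ (l - j) = 0" using l by simp
    moreover have "l - j + j = l" using l by simp
    ultimately show False using l by (simp add: v_def)
  qed
  moreover have "\<forall>x\<in>carrier G. blkD x *\<^sub>v v = v"
  proof (intro ballI eq_vecI)
    fix x a assume x: "x \<in> carrier G" and a: "a < dim_vec v"
    hence a: "a < k - j" by (simp add: v_def)
    have "(blkD x *\<^sub>v v) $ a = (\<Sum>l<k-j. M x $$ (a + j, l + j) * u $ (l + j))"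
      using a by (simp add: blkD_def v_def scalar_prod_def row_def lessThan_atLeast0)
    also have "\<dots> = (\<Sum>l<j. M x $$ (a + j, l) * u $ l) + (\<Sum>l<k-j. M x $$ (a + j, l + j) * u $ (l + j))"
      using Z x a by (subst sum.neutral[of "{..<j}"], auto)
    also have "\<dots> = (\<Sum>l<k. M x $$ (a + j, l) * u $ l)"
      by (rule sum_split[OF jk, symmetric])
    also have "\<dots> = (M x *\<^sub>v u) $ (a + j)"
      using a Mc[OF x] u by (simp add: scalar_prod_def row_def lessThan_atLeast0)
    also have "\<dots> = u $ (a + j)" using fx x by simp
    finally show "(blkD x *\<^sub>v v) $ a = v $ a" using a by (simp add: v_def)
  qed (simp add: blkD_def v_def)
  ultimately show ?thesis by (intro disjI2 bexI[of _ v], auto simp: v_def)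
next
  case False
  define v where "v = vec j (\<lambda>a. u $ a)"
  have "v \<noteq> 0\<^sub>v j"
  proof
    assume v0: "v = 0\<^sub>v j"
    have "u = 0\<^sub>v k"
    proof (rule eq_vecI)
      fix i assume "i < dim_vec (0\<^sub>v k)"
      hence i: "i < k" by simp
      show "u $ i = 0\<^sub>v k $ i"
      proof (cases "i < j")
        case True
        then have "v $ i = 0" using v0 by simp
        then show ?thesis using True i by (simp add: v_def)
      next
        case False then show ?thesis using i \<open>\<not> (\<exists>l. j \<le> l \<and> l < k \<and> u $ l \<noteq> 0)\<close> by auto
      qed
    qed (use u in auto)
    with u show False by simp
  qed
  moreover have "\<forall>x\<in>carrier G. blkB x *\<^sub>v v = v"
  proof (intro ballI eq_vecI)
    fix x a assume x: "x \<in> carrier G" and a: "a < dim_vec v"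
    hence a: "a < j" by (simp add: v_def)
    have "(blkB x *\<^sub>v v) $ a = (\<Sum>l<j. M x $$ (a, l) * u $ l)"
      using a by (simp add: blkB_def v_def scalar_prod_def row_def lessThan_atLeast0)
    also have "\<dots> = (\<Sum>l<j. M x $$ (a, l) * u $ l) + (\<Sum>l<k-j. M x $$ (a, l + j) * u $ (l + j))"
      using False by (subst sum.neutral[of "{..<k-j}"], auto)
    also have "\<dots> = (\<Sum>l<k. M x $$ (a, l) * u $ l)"
      by (rule sum_split[OF jk, symmetric])
    also have "\<dots> = (M x *\<^sub>v u) $ a"
      using a jk Mc[OF x] u by (simp add: scalar_prod_def row_def lessThan_atLeast0)
    also have "\<dots> = u $ a" using fx x by simp
    finally show "(blkB x *\<^sub>v v) $ a = v $ a" using a by (simp add: v_def)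
  qed (simp add: blkB_def v_def)
  ultimately show ?thesis by (intro disjI1 bexI[of _ v], auto simp: v_def)
qed

end

lemma split_rep:
  fixes G :: "('g, 'b) monoid_scheme" and \<sigma> :: "'g \<Rightarrow> complex mat"
  assumes grp: "group G" and fin: "finite (carrier G)" and rep: "is_rep G k \<sigma>"
    and k0: "0 < k" and nirr: "\<not> irr_rep G k \<sigma>"
  shows "\<exists>j B D. 0 < j \<and> j < k \<and> is_rep G j B \<and> is_rep G (k - j) D \<and>
     (\<forall>x\<in>carrier G. tr k \<sigma> x = tr j B x + tr (k - j) D x) \<and>
     (\<forall>x\<in>carrier G. \<sigma> x = 1\<^sub>m k \<longrightarrow> B x = 1\<^sub>m j \<and> D x = 1\<^sub>m (k - j)) \<and>
     ((\<exists>v\<in>carrier_vec k. v \<noteq> 0\<^sub>v k \<and> (\<forall>x\<in>carrier G. \<sigma> x *\<^sub>v v = v)) \<longrightarrow>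
        (\<exists>v\<in>carrier_vec j. v \<noteq> 0\<^sub>v j \<and> (\<forall>x\<in>carrier G. B x *\<^sub>v v = v)) \<or>
        (\<exists>v\<in>carrier_vec (k - j). v \<noteq> 0\<^sub>v (k - j) \<and> (\<forall>x\<in>carrier G. D x *\<^sub>v v = v)))"
proof -
  interpret group G by (rule grp)
  have sc: "\<And>x. x \<in> carrier G \<Longrightarrow> \<sigma> x \<in> carrier_mat k k" using rep unfolding is_rep_def by auto
  have smult: "\<And>x y. x \<in> carrier G \<Longrightarrow> y \<in> carrier G \<Longrightarrow> \<sigma> (x \<otimes>\<^bsub>G\<^esub> y) = \<sigma> x * \<sigma> y"
    using rep unfolding is_rep_def by auto
  have s1: "\<sigma> \<one>\<^bsub>G\<^esub> = 1\<^sub>m k" using rep unfolding is_rep_def by auto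
  obtain W where W: "invariant_subspace G k \<sigma> W" "W \<noteq> {0\<^sub>v k}" "W \<noteq> carrier_vec k"
    using nirr rep k0 unfolding irr_rep_def by auto
  have Wc: "W \<subseteq> carrier_vec k" and W0: "0\<^sub>v k \<in> W" and Wadd: "\<forall>v\<in>W. \<forall>u\<in>W. v + u \<in> W"
    and Wsm: "\<forall>c. \<forall>v\<in>W. c \<cdot>\<^sub>v v \<in> W" and Winv: "\<forall>g\<in>carrier G. \<forall>v\<in>W. \<sigma> g *\<^sub>v v \<in> W"
    using W(1) unfolding invariant_subspace_def by auto
  obtain w where w: "w \<in> W" "w \<noteq> 0\<^sub>v k" using W(2) W0 by blast
  have wc: "w \<in> carrier_vec k" using w Wc by auto
  define S where "S = (\<lambda>x. \<sigma> x *\<^sub>v w) ` carrier G"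
  have Sfin: "finite S" unfolding S_def using fin by simp
  have Sc: "S \<subseteq> carrier_vec k" unfolding S_def using sc wc by (auto intro!: mult_mat_vec_carrier)
  have SW: "S \<subseteq> W" unfolding S_def using Winv w by auto
  have wS: "w \<in> S" unfolding S_def using s1 wc by (intro image_eqI[of _ _ "\<one>\<^bsub>G\<^esub>"], auto)
  have Sinv: "\<And>x s. x \<in> carrier G \<Longrightarrow> s \<in> S \<Longrightarrow> \<sigma> x *\<^sub>v s \<in> S"
  proof -
    fix x s assume x: "x \<in> carrier G" and s: "s \<in> S"
    then obtain y where yy: "y \<in> carrier G" "s = \<sigma> y *\<^sub>v w" unfolding S_def by auto
    have "\<sigma> x *\<^sub>v s = \<sigma> (x \<otimes>\<^bsub>G\<^esub> y) *\<^sub>v w" using x yy smult by (simp add: assoc_mult_mat_vec[OF sc[OF x] sc[OF yy(1)] wc])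
    thus "\<sigma> x *\<^sub>v s \<in> S" unfolding S_def using x yy by auto
  qed
  obtain j T Ti where jT: "0 < j" "j < k" "T \<in> carrier_mat k k" "Ti \<in> carrier_mat k k"
     "T * Ti = 1\<^sub>m k" "Ti * T = 1\<^sub>m k" "\<forall>i<j. col T i \<in> S"
     "\<forall>s\<in>S. \<exists>c\<in>carrier_vec k. T *\<^sub>v c = s \<and> (\<forall>l. j \<le> l \<longrightarrow> l < k \<longrightarrow> c $ l = 0)"
    using vec_space.block_basis[OF Sfin Sc Wc W0 Wadd Wsm SW W(3) wS w(2)] by blast
  define M where "M = (\<lambda>x. Ti * \<sigma> x * T)"
  have Mc: "\<And>x. x \<in> carrier G \<Longrightarrow> M x \<in> carrier_mat k k" unfolding M_def using sc jT by auto
  have repM: "is_rep G k M"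
    unfolding is_rep_def
  proof (intro conjI ballI)
    fix x y assume x: "x \<in> carrier G" and y: "y \<in> carrier G"
    have "M x * M y = Ti * \<sigma> x * (T * Ti) * \<sigma> y * T" unfolding M_def
      using sc[OF x] sc[OF y] jT(3,4)
      by (simp add: assoc_mult_mat[of _ k k _ k _ k])
    also have "\<dots> = Ti * (\<sigma> x * \<sigma> y) * T" unfolding jT(5)
      using sc[OF x] sc[OF y] jT(3,4)
      by (simp add: assoc_mult_mat[of _ k k _ k _ k])
    finally show "M (x \<otimes>\<^bsub>G\<^esub> y) = M x * M y" unfolding M_def using smult[OF x y] by simp
  qed (use Mc jT in \<open>auto simp: M_def s1\<close>)
  have Z: "\<forall>x\<in>carrier G. \<forall>l i. j \<le> l \<longrightarrow> l < k \<longrightarrow> i < j \<longrightarrow> M x $$ (l, i) = 0"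
  proof (intro ballI allI impI)
    fix x l i assume x: "x \<in> carrier G" and l: "j \<le> l" "l < k" and i: "i < j"
    have cS: "col T i \<in> S" using jT(7) i by auto
    have cc: "col T i \<in> carrier_vec k" using cS Sc by auto
    obtain c where c: "c \<in> carrier_vec k" "T *\<^sub>v c = \<sigma> x *\<^sub>v col T i"
      "\<forall>l. j \<le> l \<longrightarrow> l < k \<longrightarrow> c $ l = 0"
      using jT(8) Sinv[OF x cS] by blast
    have "M x $$ (l, i) = col (M x) i $ l" using l i jT Mc[OF x] by simp
    also have "col (M x) i = (Ti * \<sigma> x) *\<^sub>v col T i"
      unfolding M_def using i jT sc[OF x] by (intro col_mult2[of _ k k _ k], auto)
    also have "\<dots> = Ti *\<^sub>v (T *\<^sub>v c)" using c(2) jT sc[OF x] cc by simp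
    also have "\<dots> = c" using jT c(1) by (simp add: assoc_mult_mat_vec[symmetric])
    finally show "M x $$ (l, i) = 0" using c(3) l by simp
  qed
  have jk: "j \<le> k" using jT by simp
  note bl = blkB_rep[OF grp repM jk Z] blkD_rep[OF grp repM jk Z] blk_tr[OF grp repM jk Z]
    blk_one[OF grp repM jk Z] blk_fix[OF grp repM jk Z]
  show ?thesis
  proof (intro exI conjI ballI impI)
    show "0 < j" "j < k" by (rule jT)+
    show "is_rep G j (blkB j M)" by (rule bl(1))
    show "is_rep G (k - j) (blkD k j M)" by (rule bl(2))
  next
    fix x assume x: "x \<in> carrier G"
    have "tr k \<sigma> x = tr k M x" unfolding tr_def M_def
      using trace_sim[OF sc[OF x] jT(3,4,5)] by simp
    thus "tr k \<sigma> x = tr j (blkB j M) x + tr (k - j) (blkD k j M) x" using bl(3) by simp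
  next
    fix x assume x: "x \<in> carrier G" and s: "\<sigma> x = 1\<^sub>m k"
    have "M x = 1\<^sub>m k" unfolding M_def s using jT by simp
    thus "blkB j M x = 1\<^sub>m j" "blkD k j M x = 1\<^sub>m (k - j)" using bl(4) by auto
  next
    assume "\<exists>v\<in>carrier_vec k. v \<noteq> 0\<^sub>v k \<and> (\<forall>x\<in>carrier G. \<sigma> x *\<^sub>v v = v)"
    then obtain v where v: "v \<in> carrier_vec k" "v \<noteq> 0\<^sub>v k" "\<forall>x\<in>carrier G. \<sigma> x *\<^sub>v v = v" by auto
    define u where "u = Ti *\<^sub>v v"
    have uc: "u \<in> carrier_vec k" unfolding u_def using jT v by auto
    have Tu: "T *\<^sub>v u = v" unfolding u_def using jT v by (simp add: assoc_mult_mat_vec[symmetric])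
    have u0: "u \<noteq> 0\<^sub>v k"
    proof
      assume "u = 0\<^sub>v k"
      with Tu jT have "v = 0\<^sub>v k" by auto
      with v show False by simp
    qed
    have "\<forall>x\<in>carrier G. M x *\<^sub>v u = u"
    proof
      fix x assume x: "x \<in> carrier G"
      have "M x *\<^sub>v u = (Ti * \<sigma> x) *\<^sub>v (T *\<^sub>v u)" unfolding M_def
        by (rule assoc_mult_mat_vec, insert jT sc[OF x] uc, auto)
      also have "\<dots> = Ti *\<^sub>v (\<sigma> x *\<^sub>v (T *\<^sub>v u))"
        by (rule assoc_mult_mat_vec, insert jT sc[OF x] uc, auto)
      also have "\<dots> = u" unfolding Tu using v x u_def by simp
      finally show "M x *\<^sub>v u = u" .
    qed
    thus "(\<exists>v\<in>carrier_vec j. v \<noteq> 0\<^sub>v j \<and> (\<forall>x\<in>carrier G. blkB j M x *\<^sub>v v = v)) \<or>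
        (\<exists>v\<in>carrier_vec (k - j). v \<noteq> 0\<^sub>v (k - j) \<and> (\<forall>x\<in>carrier G. blkD k j M x *\<^sub>v v = v))"
      using bl(5)[OF uc u0] by simp
  qed
qed

lemma entry_unit:
  fixes A :: "complex mat"
  assumes "A \<in> carrier_mat k k" "i < k" "j < k"
  shows "A $$ (i, j) = (A *\<^sub>v unit_vec k j) $ i"
  using assms by simp

lemma mat_eq_by_vec:
  fixes A B :: "complex mat"
  assumes A: "A \<in> carrier_mat k k" and B: "B \<in> carrier_mat k k"
    and eq: "\<forall>v\<in>carrier_vec k. A *\<^sub>v v = B *\<^sub>v v"
  shows "A = B"
proof (rule eq_matI)
  fix i j assume "i < dim_row B" "j < dim_col B"
  hence i: "i < k" and j: "j < k" using B by auto
  show "A $$ (i, j) = B $$ (i, j)"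
    using entry_unit[OF A i j] entry_unit[OF B i j] eq j by simp
qed (use A B in auto)

lemma fix_irr:
  fixes G :: "('g, 'b) monoid_scheme" and \<sigma> :: "'g \<Rightarrow> complex mat"
  assumes irr: "irr_rep G k \<sigma>" and v: "v \<in> carrier_vec k" "v \<noteq> 0\<^sub>v k"
    and fx: "\<forall>x\<in>carrier G. \<sigma> x *\<^sub>v v = v"
  shows "\<forall>x\<in>carrier G. \<sigma> x = 1\<^sub>m k"
proof
  have rep: "is_rep G k \<sigma>" using irr unfolding irr_rep_def by auto
  have sc: "\<And>x. x \<in> carrier G \<Longrightarrow> \<sigma> x \<in> carrier_mat k k" using rep unfolding is_rep_def by auto
  define W where "W = {c \<cdot>\<^sub>v v | c. True}"
  have inv: "invariant_subspace G k \<sigma> W"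
    unfolding invariant_subspace_def
  proof (intro conjI ballI allI)
    show "W \<subseteq> carrier_vec k" unfolding W_def using v by auto
    show "0\<^sub>v k \<in> W" unfolding W_def using v by (intro CollectI exI[of _ 0], auto)
  next
    fix a b assume "a \<in> W" "b \<in> W"
    then obtain c d where "a = c \<cdot>\<^sub>v v" "b = d \<cdot>\<^sub>v v" unfolding W_def by auto
    thus "a + b \<in> W" unfolding W_def by (auto simp: add_smult_distrib_vec[symmetric])
  next
    fix e a assume "a \<in> W"
    then obtain c where "a = c \<cdot>\<^sub>v v" unfolding W_def by auto
    thus "e \<cdot>\<^sub>v a \<in> W" unfolding W_def by (auto simp: smult_smult_assoc)
  next
    fix g a assume g: "g \<in> carrier G" and "a \<in> W"
    then obtain c where "a = c \<cdot>\<^sub>v v" unfolding W_def by auto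
    thus "\<sigma> g *\<^sub>v a \<in> W" unfolding W_def using mult_mat_vec[OF sc[OF g] v(1)] fx g by auto
  qed
  have "v \<in> W" unfolding W_def by (intro CollectI exI[of _ 1], simp)
  hence Wall: "W = carrier_vec k" using irr inv v(2) unfolding irr_rep_def by auto
  fix x assume x: "x \<in> carrier G"
  show "\<sigma> x = 1\<^sub>m k"
  proof (rule mat_eq_by_vec[OF sc[OF x]], simp, intro ballI)
    fix u :: "complex vec" assume "u \<in> carrier_vec k"
    hence "u \<in> W" using Wall by simp
    then obtain c where u: "u = c \<cdot>\<^sub>v v" unfolding W_def by auto
    show "\<sigma> x *\<^sub>v u = 1\<^sub>m k *\<^sub>v u"
      unfolding u using mult_mat_vec[OF sc[OF x] v(1)] fx x v by simp
  qed
qed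

lemma tr_one: "(\<forall>x\<in>A. \<sigma> x = 1\<^sub>m k) \<Longrightarrow> g \<in> A \<Longrightarrow> tr k \<sigma> g = of_nat k"
  unfolding tr_def by simp

lemma claim:
  fixes G :: "('g, 'b) monoid_scheme" and N :: "'g set"
  assumes grp: "group G" and fin: "finite (carrier G)" and g: "g \<in> carrier G"
    and NG: "N \<subseteq> carrier G"
    and H: "\<And>n \<rho>. irr_rep G n \<rho> \<Longrightarrow> (\<forall>x\<in>N. \<rho> x = 1\<^sub>m n) \<Longrightarrow> tr n \<rho> g = 0 \<or> tr n \<rho> g = of_nat n"
  shows "is_rep G k \<sigma> \<Longrightarrow> (\<forall>x\<in>N. \<sigma> x = 1\<^sub>m k) \<Longrightarrow>
     \<exists>t::nat. tr k \<sigma> g = of_nat t \<and>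
       ((\<exists>v\<in>carrier_vec k. v \<noteq> 0\<^sub>v k \<and> (\<forall>x\<in>carrier G. \<sigma> x *\<^sub>v v = v)) \<longrightarrow> 1 \<le> t)"
proof (induction k arbitrary: \<sigma> rule: less_induct)
  case (less k \<sigma>)
  note rep = less.prems(1) and ker = less.prems(2)
  show ?case
  proof (cases "k = 0")
    case True
    have "\<forall>v\<in>carrier_vec k. v = 0\<^sub>v k" using True by (auto intro!: eq_vecI)
    thus ?thesis using True by (intro exI[of _ 0]) (auto simp: tr_def)
  next
    case False
    show ?thesis
    proof (cases "irr_rep G k \<sigma>")
      case irr: True
      show ?thesis
      proof (cases "\<exists>v\<in>carrier_vec k. v \<noteq> 0\<^sub>v k \<and> (\<forall>x\<in>carrier G. \<sigma> x *\<^sub>v v = v)")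
        case True
        then obtain v where v: "v \<in> carrier_vec k" "v \<noteq> 0\<^sub>v k" "\<forall>x\<in>carrier G. \<sigma> x *\<^sub>v v = v" by auto
        have "tr k \<sigma> g = of_nat k" using tr_one[OF fix_irr[OF irr v] g] .
        thus ?thesis using False by (intro exI[of _ k]) auto
      next
        case nf: False
        from H[OF irr ker] show ?thesis
        proof
          assume "tr k \<sigma> g = 0" thus ?thesis using nf by (intro exI[of _ 0]) auto
        next
          assume "tr k \<sigma> g = of_nat k" thus ?thesis using nf by (intro exI[of _ k]) auto
        qed
      qed
    next
      case nirr: False
      obtain j B D where jBD: "0 < j" "j < k" "is_rep G j B" "is_rep G (k - j) D"
        "\<forall>x\<in>carrier G. tr k \<sigma> x = tr j B x + tr (k - j) D x"
        "\<forall>x\<in>carrier G. \<sigma> x = 1\<^sub>m k \<longrightarrow> B x = 1\<^sub>m j \<and> D x = 1\<^sub>m (k - j)"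
        "(\<exists>v\<in>carrier_vec k. v \<noteq> 0\<^sub>v k \<and> (\<forall>x\<in>carrier G. \<sigma> x *\<^sub>v v = v)) \<longrightarrow>
          (\<exists>v\<in>carrier_vec j. v \<noteq> 0\<^sub>v j \<and> (\<forall>x\<in>carrier G. B x *\<^sub>v v = v)) \<or>
          (\<exists>v\<in>carrier_vec (k - j). v \<noteq> 0\<^sub>v (k - j) \<and> (\<forall>x\<in>carrier G. D x *\<^sub>v v = v))"
        using split_rep[OF grp fin rep _ nirr] False by blast
      have kB: "\<forall>x\<in>N. B x = 1\<^sub>m j" using jBD(6) ker NG by auto
      have kD: "\<forall>x\<in>N. D x = 1\<^sub>m (k - j)" using jBD(6) ker NG by auto
      obtain tB where tB: "tr j B g = of_nat tB"
        "(\<exists>v\<in>carrier_vec j. v \<noteq> 0\<^sub>v j \<and> (\<forall>x\<in>carrier G. B x *\<^sub>v v = v)) \<longrightarrow> 1 \<le> tB"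
        using less.IH[OF jBD(2) jBD(3) kB] by blast
      obtain tD where tD: "tr (k - j) D g = of_nat tD"
        "(\<exists>v\<in>carrier_vec (k - j). v \<noteq> 0\<^sub>v (k - j) \<and> (\<forall>x\<in>carrier G. D x *\<^sub>v v = v)) \<longrightarrow> 1 \<le> tD"
        using less.IH[OF _ jBD(4) kD] jBD(1,2) by auto
      show ?thesis
        by (rule exI[of _ "tB + tD"], insert jBD(5,7) tB tD g, auto)
    qed
  qed
qed

lemma schur:
  fixes G :: "('g, 'b) monoid_scheme" and \<rho> :: "'g \<Rightarrow> complex mat"
  assumes irr: "irr_rep G n \<rho>" and A: "A \<in> carrier_mat n n"
    and comm: "\<forall>x\<in>carrier G. A * \<rho> x = \<rho> x * A"
  shows "\<exists>c. \<forall>v\<in>carrier_vec n. A *\<^sub>v v = c \<cdot>\<^sub>v v"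
proof -
  have rep: "is_rep G n \<rho>" and n0: "0 < n" using irr unfolding irr_rep_def by auto
  have sc: "\<And>x. x \<in> carrier G \<Longrightarrow> \<rho> x \<in> carrier_mat n n" using rep unfolding is_rep_def by auto
  have "Polynomial.degree (char_poly A) = n" using degree_monic_char_poly[OF A] by simp
  hence "\<not> constant (poly (char_poly A))" using n0 constant_degree[of "char_poly A"] by simp
  then obtain c where "poly (char_poly A) c = 0" using fundamental_theorem_of_algebra by blast
  hence "eigenvalue A c" using eigenvalue_root_char_poly[OF A] by simp
  then obtain w where w: "eigenvector A w c" unfolding eigenvalue_def by auto
  hence wc: "w \<in> carrier_vec n" "w \<noteq> 0\<^sub>v n" "A *\<^sub>v w = c \<cdot>\<^sub>v w" using A unfolding eigenvector_def by auto
  define W where "W = {v \<in> carrier_vec n. A *\<^sub>v v = c \<cdot>\<^sub>v v}"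
  have inv: "invariant_subspace G n \<rho> W"
    unfolding invariant_subspace_def
  proof (intro conjI ballI allI)
    show "W \<subseteq> carrier_vec n" unfolding W_def by auto
    show "0\<^sub>v n \<in> W" unfolding W_def using A by auto
  next
    fix a b assume "a \<in> W" "b \<in> W"
    thus "a + b \<in> W" unfolding W_def using A
      by (auto simp: mult_add_distrib_mat_vec[OF A] smult_add_distrib_vec)
  next
    fix e a assume "a \<in> W"
    thus "e \<cdot>\<^sub>v a \<in> W" unfolding W_def
      by (auto simp: mult_mat_vec[OF A] smult_smult_assoc mult.commute)
  next
    fix g a assume g: "g \<in> carrier G" and a: "a \<in> W"
    have "A *\<^sub>v (\<rho> g *\<^sub>v a) = (A * \<rho> g) *\<^sub>v a" using A sc[OF g] a unfolding W_def
      by (simp add: assoc_mult_mat_vec)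
    also have "\<dots> = (\<rho> g * A) *\<^sub>v a" using comm g by simp
    also have "\<dots> = \<rho> g *\<^sub>v (c \<cdot>\<^sub>v a)" using A sc[OF g] a unfolding W_def
      by (simp add: assoc_mult_mat_vec)
    also have "\<dots> = c \<cdot>\<^sub>v (\<rho> g *\<^sub>v a)" using mult_mat_vec[OF sc[OF g]] a unfolding W_def by simp
    finally show "\<rho> g *\<^sub>v a \<in> W" unfolding W_def using sc[OF g] a unfolding W_def by auto
  qed
  have "w \<in> W" unfolding W_def using wc by auto
  hence "W = carrier_vec n" using irr inv wc(2) unfolding irr_rep_def by auto
  thus ?thesis unfolding W_def by auto
qed

lemma sum_unique:
  fixes m :: nat
  assumes "\<exists>!i. i < m \<and> P i"
  shows "(\<Sum>i<m. f i * (if P i then 1 else 0)) = (\<Sum>i<m. if i < m \<and> P i then f i else 0 :: complex)"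
  by (rule sum.cong, auto)

lemma sum_delta_unique:
  fixes m :: nat
  assumes "\<exists>!i. i < m \<and> P i" and "i0 < m" "P i0"
  shows "(\<Sum>i<m. f i * (if P i then 1 else 0 :: complex)) = f i0"
proof -
  have "\<And>i. i < m \<Longrightarrow> P i = (i = i0)" using assms by blast
  hence "(\<Sum>i<m. f i * (if P i then 1 else 0 :: complex)) = (\<Sum>i<m. if i = i0 then f i else 0)"
    by (intro sum.cong, auto)
  also have "\<dots> = (if i0 = i0 then f i0 else 0) + (\<Sum>i\<in>{..<m}-{i0}. if i = i0 then f i else 0)"
    by (rule sum.remove) (use assms(2) in auto)
  also have "\<dots> = f i0" by simp
  finally show ?thesis .
qed

context group begin

lemma conj_mem:
  assumes nN: "N \<lhd> G" and x: "x \<in> carrier G" and h: "h \<in> carrier G"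
  shows "x \<otimes> h \<otimes> inv x \<in> N \<longleftrightarrow> h \<in> N"
proof
  assume "x \<otimes> h \<otimes> inv x \<in> N"
  hence "inv x \<otimes> (x \<otimes> h \<otimes> inv x) \<otimes> x \<in> N" using normal.inv_op_closed1[OF nN x] by blast
  also have "inv x \<otimes> (x \<otimes> h \<otimes> inv x) \<otimes> x = h" using x h
    by (metis inv_closed inv_solve_left m_assoc m_closed r_inv r_one)
  finally show "h \<in> N" .
next
  assume "h \<in> N" thus "x \<otimes> h \<otimes> inv x \<in> N" using normal.inv_op_closed2[OF nN x] by blast
qed

lemma perm_rep_exists:
  assumes fin: "finite (carrier G)" and nN: "N \<lhd> G"
  shows "\<exists>m \<pi>. 0 < m \<and> is_rep G m \<pi> \<and> (\<forall>x\<in>N. \<pi> x = 1\<^sub>m m) \<and>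
     (\<forall>g\<in>carrier G. g \<notin> N \<longrightarrow> tr m \<pi> g = 0) \<and>
     (\<forall>x\<in>carrier G. \<pi> x *\<^sub>v vec m (\<lambda>_. 1) = vec m (\<lambda>_. 1))"
proof -
  have sg: "subgroup N G" using nN by (rule normal_imp_subgroup)
  have NG: "N \<subseteq> carrier G" using sg by (rule subgroup.subset)
  define rel where "rel a b \<longleftrightarrow> a \<otimes> inv b \<in> N" for a b
  have refl: "\<And>a. a \<in> carrier G \<Longrightarrow> rel a a" unfolding rel_def using subgroup.one_closed[OF sg] by simp
  have sym: "\<And>a b. a \<in> carrier G \<Longrightarrow> b \<in> carrier G \<Longrightarrow> rel a b \<Longrightarrow> rel b a"
  proof -
    fix a b assume a: "a \<in> carrier G" and b: "b \<in> carrier G" and r: "rel a b"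
    have "inv (a \<otimes> inv b) \<in> N" using r subgroup.m_inv_closed[OF sg] unfolding rel_def by blast
    also have "inv (a \<otimes> inv b) = b \<otimes> inv a" using a b by (simp add: inv_mult_group)
    finally show "rel b a" unfolding rel_def .
  qed
  have trans: "\<And>a b c. a \<in> carrier G \<Longrightarrow> b \<in> carrier G \<Longrightarrow> c \<in> carrier G \<Longrightarrow> rel a b \<Longrightarrow> rel b c \<Longrightarrow> rel a c"
  proof -
    fix a b c assume a: "a \<in> carrier G" and b: "b \<in> carrier G" and c: "c \<in> carrier G"
      and r: "rel a b" "rel b c"
    have "(a \<otimes> inv b) \<otimes> (b \<otimes> inv c) \<in> N" using r subgroup.m_closed[OF sg] unfolding rel_def by blast
    also have "(a \<otimes> inv b) \<otimes> (b \<otimes> inv c) = a \<otimes> inv c" using a b c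
      by (metis inv_closed l_inv l_one m_assoc m_closed)
    finally show "rel a c" unfolding rel_def .
  qed
  have left: "\<And>x b c. x \<in> carrier G \<Longrightarrow> b \<in> carrier G \<Longrightarrow> c \<in> carrier G \<Longrightarrow> rel (x \<otimes> b) (x \<otimes> c) \<longleftrightarrow> rel b c"
  proof -
    fix x b c assume x: "x \<in> carrier G" and b: "b \<in> carrier G" and c: "c \<in> carrier G"
    have "(x \<otimes> b) \<otimes> inv (x \<otimes> c) = x \<otimes> (b \<otimes> inv c) \<otimes> inv x" using x b c
      by (simp add: inv_mult_group m_assoc)
    thus "rel (x \<otimes> b) (x \<otimes> c) \<longleftrightarrow> rel b c" unfolding rel_def using conj_mem[OF nN x] b c by simp
  qed
  define cl where "cl a = {b \<in> carrier G. rel b a}" for a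
  define f where "f a = (SOME b. b \<in> cl a)" for a
  have fcl: "\<And>a. a \<in> carrier G \<Longrightarrow> f a \<in> cl a"
  proof -
    fix a assume a: "a \<in> carrier G"
    show "f a \<in> cl a" unfolding f_def by (rule someI[of _ a], insert refl a, auto simp: cl_def)
  qed
  have fG: "\<And>a. a \<in> carrier G \<Longrightarrow> f a \<in> carrier G" using fcl unfolding cl_def by auto
  have frel: "\<And>a. a \<in> carrier G \<Longrightarrow> rel a (f a)" using fcl sym fG unfolding cl_def by auto
  have feq: "\<And>a a'. a \<in> carrier G \<Longrightarrow> a' \<in> carrier G \<Longrightarrow> rel a a' \<Longrightarrow> f a = f a'"
  proof -
    fix a a' assume a: "a \<in> carrier G" and a': "a' \<in> carrier G" and r: "rel a a'"
    have "cl a = cl a'" unfolding cl_def using r a a' trans sym by blast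
    thus "f a = f a'" unfolding f_def by simp
  qed
  define Rp where "Rp = f ` carrier G"
  have RpG: "Rp \<subseteq> carrier G" unfolding Rp_def using fG by auto
  have uniq: "\<And>a r r'. a \<in> carrier G \<Longrightarrow> r \<in> Rp \<Longrightarrow> r' \<in> Rp \<Longrightarrow> rel a r \<Longrightarrow> rel a r' \<Longrightarrow> r = r'"
  proof -
    fix a r r' assume a: "a \<in> carrier G" and r: "r \<in> Rp" "r' \<in> Rp" and rr: "rel a r" "rel a r'"
    obtain b b' where b: "b \<in> carrier G" "r = f b" "b' \<in> carrier G" "r' = f b'" using r unfolding Rp_def by auto
    have "rel r b" using fcl[OF b(1)] b unfolding cl_def by auto
    hence "rel a b" using trans[OF a _ b(1) rr(1)] b fG by auto
    have "rel r' b'" using fcl[OF b(3)] b unfolding cl_def by auto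
    hence "rel a b'" using trans[OF a _ b(3) rr(2)] b fG by auto
    have "rel b b'" using trans[OF b(1) a b(3)] sym[OF a b(1) \<open>rel a b\<close>] \<open>rel a b'\<close> by auto
    thus "r = r'" using feq b by auto
  qed
  have ex: "\<And>a. a \<in> carrier G \<Longrightarrow> \<exists>r\<in>Rp. rel a r" using frel unfolding Rp_def by auto
  obtain rs where rs: "set rs = Rp" "distinct rs" using finite_distinct_list[of Rp] fin unfolding Rp_def by auto
  define m where "m = length rs"
  have rsG: "\<And>i. i < m \<Longrightarrow> rs ! i \<in> carrier G" using rs RpG unfolding m_def by auto
  have uidx: "\<And>a. a \<in> carrier G \<Longrightarrow> \<exists>!i. i < m \<and> rel a (rs ! i)"
  proof -
    fix a assume a: "a \<in> carrier G"
    obtain r where r: "r \<in> Rp" "rel a r" using ex[OF a] by auto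
    obtain i where i: "i < m" "rs ! i = r" using r rs unfolding m_def by (metis in_set_conv_nth)
    show "\<exists>!i. i < m \<and> rel a (rs ! i)"
    proof (rule ex1I[of _ i])
      show "i < m \<and> rel a (rs ! i)" using i r by auto
      fix i' assume i': "i' < m \<and> rel a (rs ! i')"
      have eq: "rs ! i' = rs ! i" using uniq[OF a _ _ _ r(2)] i' i rs unfolding m_def by auto
      have "i' < length rs" "i < length rs" using i i' unfolding m_def by auto
      thus "i' = i" using nth_eq_iff_index_eq[OF rs(2)] eq by blast
    qed
  qed
  have m0: "0 < m" using uidx[OF one_closed] by auto
  define \<pi> where "\<pi> x = mat m m (\<lambda>(i, j). if rel (x \<otimes> rs ! j) (rs ! i) then 1 else 0 :: complex)" for x
  have \<pi>c: "\<And>x. \<pi> x \<in> carrier_mat m m" unfolding \<pi>_def by simp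
  have diag: "\<And>x. x \<in> carrier G \<Longrightarrow> (\<forall>j<m. rel (x \<otimes> rs ! j) (rs ! j)) \<Longrightarrow> \<pi> x = 1\<^sub>m m"
  proof -
    fix x assume x: "x \<in> carrier G" and d: "\<forall>j<m. rel (x \<otimes> rs ! j) (rs ! j)"
    show "\<pi> x = 1\<^sub>m m"
    proof (rule eq_matI)
      fix i j assume "i < dim_row (1\<^sub>m m)" "j < dim_col (1\<^sub>m m)"
      hence i: "i < m" and j: "j < m" by auto
      have "rel (x \<otimes> rs ! j) (rs ! i) \<longleftrightarrow> i = j"
        using uidx[of "x \<otimes> rs ! j"] d rsG x i j by blast
      thus "\<pi> x $$ (i, j) = 1\<^sub>m m $$ (i, j)" unfolding \<pi>_def using i j by simp
    qed (auto simp: \<pi>_def)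
  qed
  have rep: "is_rep G m \<pi>"
    unfolding is_rep_def
  proof (intro conjI ballI)
    fix x y assume x: "x \<in> carrier G" and y: "y \<in> carrier G"
    show "\<pi> (x \<otimes> y) = \<pi> x * \<pi> y"
    proof (rule eq_matI)
      fix i j assume "i < dim_row (\<pi> x * \<pi> y)" "j < dim_col (\<pi> x * \<pi> y)"
      hence i: "i < m" and j: "j < m" by (auto simp: \<pi>_def)
      have yj: "y \<otimes> rs ! j \<in> carrier G" using y rsG j by auto
      obtain l0 where l0: "l0 < m" "rel (y \<otimes> rs ! j) (rs ! l0)" using uidx[OF yj] by auto
      have "(\<pi> x * \<pi> y) $$ (i, j) = (\<Sum>l<m. \<pi> x $$ (i, l) * \<pi> y $$ (l, j))"
        by (rule mult_entry[OF \<pi>c \<pi>c i j])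
      also have "\<dots> = (\<Sum>l<m. \<pi> x $$ (i, l) * (if rel (y \<otimes> rs ! j) (rs ! l) then 1 else 0))"
        by (rule sum.cong, auto simp: \<pi>_def j)
      also have "\<dots> = \<pi> x $$ (i, l0)"
        by (rule sum_delta_unique[OF uidx[OF yj] l0])
      also have "\<dots> = (if rel (x \<otimes> rs ! l0) (rs ! i) then 1 else 0)" unfolding \<pi>_def using i l0 by simp
      also have "rel (x \<otimes> rs ! l0) (rs ! i) \<longleftrightarrow> rel (x \<otimes> y \<otimes> rs ! j) (rs ! i)"
      proof -
        have "rel (x \<otimes> (y \<otimes> rs ! j)) (x \<otimes> rs ! l0)" using left[OF x yj rsG[OF l0(1)]] l0 by simp
        hence r: "rel (x \<otimes> y \<otimes> rs ! j) (x \<otimes> rs ! l0)" using x y rsG j by (simp add: m_assoc)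
        have c1: "x \<otimes> y \<otimes> rs ! j \<in> carrier G" "x \<otimes> rs ! l0 \<in> carrier G" using x y rsG j l0 by auto
        show ?thesis using trans[OF c1(1) c1(2) rsG[OF i] r] trans[OF c1(2) c1(1) rsG[OF i] sym[OF c1 r]]
          by blast
      qed
      finally show "\<pi> (x \<otimes> y) $$ (i, j) = (\<pi> x * \<pi> y) $$ (i, j)" unfolding \<pi>_def using i j by simp
    qed (auto simp: \<pi>_def)
  next
    show "\<pi> \<one> = 1\<^sub>m m" using diag[OF one_closed] refl rsG by simp
  qed (simp add: \<pi>c)
  have ker: "\<forall>x\<in>N. \<pi> x = 1\<^sub>m m"
  proof
    fix x assume xN: "x \<in> N"
    hence x: "x \<in> carrier G" using NG by auto
    show "\<pi> x = 1\<^sub>m m"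
    proof (rule diag[OF x], intro allI impI)
      fix j assume j: "j < m"
      have "x \<otimes> rs ! j \<otimes> inv (rs ! j) = x" using x rsG[OF j] by (simp add: m_assoc)
      thus "rel (x \<otimes> rs ! j) (rs ! j)" unfolding rel_def using xN by simp
    qed
  qed
  have trg: "\<forall>g\<in>carrier G. g \<notin> N \<longrightarrow> tr m \<pi> g = 0"
  proof (intro ballI impI)
    fix g assume g: "g \<in> carrier G" and gN: "g \<notin> N"
    have "\<And>i. i < m \<Longrightarrow> \<not> rel (g \<otimes> rs ! i) (rs ! i)"
    proof -
      fix i assume i: "i < m"
      have "g \<otimes> rs ! i \<otimes> inv (rs ! i) = g" using g rsG[OF i] by (simp add: m_assoc)
      thus "\<not> rel (g \<otimes> rs ! i) (rs ! i)" unfolding rel_def using gN by simp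
    qed
    thus "tr m \<pi> g = 0" unfolding tr_def \<pi>_def by (intro sum.neutral, auto)
  qed
  have fixv: "\<forall>x\<in>carrier G. \<pi> x *\<^sub>v vec m (\<lambda>_. 1) = vec m (\<lambda>_. 1)"
  proof (intro ballI eq_vecI)
    fix x i assume x: "x \<in> carrier G" and "i < dim_vec (vec m (\<lambda>_. 1 :: complex))"
    hence i: "i < m" by simp
    have a: "inv x \<otimes> rs ! i \<in> carrier G" using x rsG[OF i] by auto
    have eqv: "\<And>j. j < m \<Longrightarrow> rel (x \<otimes> rs ! j) (rs ! i) \<longleftrightarrow> rel (rs ! j) (inv x \<otimes> rs ! i)"
    proof -
      fix j assume j: "j < m"
      have "rs ! i = x \<otimes> (inv x \<otimes> rs ! i)" using x rsG[OF i] by (simp add: m_assoc[symmetric])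
      hence "rel (x \<otimes> rs ! j) (rs ! i) \<longleftrightarrow> rel (x \<otimes> rs ! j) (x \<otimes> (inv x \<otimes> rs ! i))" by simp
      also have "\<dots> \<longleftrightarrow> rel (rs ! j) (inv x \<otimes> rs ! i)" using left[OF x rsG[OF j] a] .
      finally show "rel (x \<otimes> rs ! j) (rs ! i) \<longleftrightarrow> rel (rs ! j) (inv x \<otimes> rs ! i)" .
    qed
    obtain j0 where j0: "j0 < m" "rel (inv x \<otimes> rs ! i) (rs ! j0)" using uidx[OF a] by auto
    have u2: "\<exists>!j. j < m \<and> rel (rs ! j) (inv x \<otimes> rs ! i)"
    proof (rule ex1I[of _ j0])
      show "j0 < m \<and> rel (rs ! j0) (inv x \<otimes> rs ! i)" using j0 sym[OF a rsG[OF j0(1)]] by auto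
      fix j assume "j < m \<and> rel (rs ! j) (inv x \<otimes> rs ! i)"
      hence "j < m" "rel (inv x \<otimes> rs ! i) (rs ! j)" using sym[OF rsG a] by auto
      thus "j = j0" using uidx[OF a] j0 by blast
    qed
    have "(\<pi> x *\<^sub>v vec m (\<lambda>_. 1)) $ i = (\<Sum>j<m. \<pi> x $$ (i, j) * 1)"
      using i by (simp add: \<pi>_def scalar_prod_def row_def lessThan_atLeast0)
    also have "\<dots> = (\<Sum>j<m. 1 * (if rel (rs ! j) (inv x \<otimes> rs ! i) then 1 else 0))"
      using eqv i by (intro sum.cong, auto simp: \<pi>_def)
    also have "\<dots> = 1" by (rule sum_delta_unique[OF u2 j0(1)], insert j0 sym[OF a rsG[OF j0(1)]], auto)
    finally show "(\<pi> x *\<^sub>v vec m (\<lambda>_. 1)) $ i = vec m (\<lambda>_. 1) $ i" using i by simp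
  qed (simp add: \<pi>_def)
  show ?thesis using m0 rep ker trg fixv by blast
qed

lemma key:
  assumes fin: "finite (carrier G)" and nN: "N \<lhd> G" and g: "g \<in> carrier G" and gN: "g \<notin> N"
  shows "\<exists>n \<rho>. irr_rep G n \<rho> \<and> (\<forall>x\<in>N. \<rho> x = 1\<^sub>m n) \<and> tr n \<rho> g \<noteq> 0 \<and> tr n \<rho> g \<noteq> of_nat n"
proof (rule ccontr)
  assume "\<not> ?thesis"
  hence H: "\<And>n \<rho>. irr_rep G n \<rho> \<Longrightarrow> (\<forall>x\<in>N. \<rho> x = 1\<^sub>m n) \<Longrightarrow> tr n \<rho> g = 0 \<or> tr n \<rho> g = of_nat n"
    by blast
  have NG: "N \<subseteq> carrier G" using normal_imp_subgroup[OF nN] by (rule subgroup.subset)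
  obtain m \<pi> where m: "0 < m" "is_rep G m \<pi>" "\<forall>x\<in>N. \<pi> x = 1\<^sub>m m"
     "\<forall>g\<in>carrier G. g \<notin> N \<longrightarrow> tr m \<pi> g = 0"
     "\<forall>x\<in>carrier G. \<pi> x *\<^sub>v vec m (\<lambda>_. 1) = vec m (\<lambda>_. 1)"
    using perm_rep_exists[OF fin nN] by blast
  obtain t where t: "tr m \<pi> g = of_nat t"
    "(\<exists>v\<in>carrier_vec m. v \<noteq> 0\<^sub>v m \<and> (\<forall>x\<in>carrier G. \<pi> x *\<^sub>v v = v)) \<longrightarrow> 1 \<le> t"
    using claim[OF is_group fin g NG H m(2,3)] by blast
  have "vec m (\<lambda>_. 1 :: complex) \<noteq> 0\<^sub>v m"
  proof
    assume "vec m (\<lambda>_. 1 :: complex) = 0\<^sub>v m"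
    hence "vec m (\<lambda>_. 1 :: complex) $ 0 = 0\<^sub>v m $ 0" by simp
    thus False using m(1) by simp
  qed
  hence "1 \<le> t" using t(2) m(5) by auto
  moreover have "t = 0" using t(1) m(4) g gN by simp
  ultimately show False by simp
qed

end

definition chi :: "('g, 'b) monoid_scheme \<Rightarrow> nat \<Rightarrow> ('g \<Rightarrow> complex mat) \<Rightarrow> 'g \<Rightarrow> complex" where
  "chi G n \<rho> = (\<lambda>g. if g \<in> carrier G then tr n \<rho> g else 0)"

lemma chi_Irr: "irr_rep G n \<rho> \<Longrightarrow> chi G n \<rho> \<in> Irr G"
  unfolding Irr_def chi_def tr_def by blast

lemma mat11_comm:
  fixes A B :: "complex mat"
  assumes "A \<in> carrier_mat 1 1" "B \<in> carrier_mat 1 1"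
  shows "A * B = B * A"
  using assms by (intro eq_matI) (auto simp: scalar_prod_def mult.commute)

context group begin

lemma rep_facts:
  assumes rep: "is_rep G n \<rho>"
  shows "\<And>x. x \<in> carrier G \<Longrightarrow> \<rho> x \<in> carrier_mat n n"
    and "\<And>x y. x \<in> carrier G \<Longrightarrow> y \<in> carrier G \<Longrightarrow> \<rho> (x \<otimes> y) = \<rho> x * \<rho> y"
    and "\<rho> \<one> = 1\<^sub>m n"
    and "\<And>x. x \<in> carrier G \<Longrightarrow> \<rho> x * \<rho> (inv x) = 1\<^sub>m n"
    and "\<And>x. x \<in> carrier G \<Longrightarrow> \<rho> (inv x) * \<rho> x = 1\<^sub>m n"
proof -
  show c: "\<And>x. x \<in> carrier G \<Longrightarrow> \<rho> x \<in> carrier_mat n n"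
   and m: "\<And>x y. x \<in> carrier G \<Longrightarrow> y \<in> carrier G \<Longrightarrow> \<rho> (x \<otimes> y) = \<rho> x * \<rho> y"
   and o: "\<rho> \<one> = 1\<^sub>m n" using rep unfolding is_rep_def by auto
  fix x assume x: "x \<in> carrier G"
  show "\<rho> x * \<rho> (inv x) = 1\<^sub>m n" using m[OF x inv_closed[OF x]] o x by simp
  show "\<rho> (inv x) * \<rho> x = 1\<^sub>m n" using m[OF inv_closed[OF x] x] o x by simp
qed

lemma comm_kernel:
  assumes rep: "is_rep G n \<rho>" and comm: "\<forall>x\<in>carrier G. \<forall>y\<in>carrier G. \<rho> x * \<rho> y = \<rho> y * \<rho> x"
  shows "\<forall>c\<in>derived G (carrier G). \<rho> c = 1\<^sub>m n"
proof -
  note rf = rep_facts[OF rep]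
  define K where "K = {x \<in> carrier G. \<rho> x = 1\<^sub>m n}"
  have sgK: "subgroup K G"
  proof (rule subgroupI)
    show "K \<subseteq> carrier G" unfolding K_def by auto
    show "K \<noteq> {}" unfolding K_def using rf(3) by auto
  next
    fix a assume a: "a \<in> K"
    hence "\<rho> (inv a) = \<rho> (inv a) * \<rho> a" unfolding K_def using rf(1)[of "inv a"]
      by (auto simp: right_mult_one_mat)
    also have "\<dots> = 1\<^sub>m n" using rf(5) a unfolding K_def by blast
    finally have "\<rho> (inv a) = 1\<^sub>m n" .
    thus "inv a \<in> K" unfolding K_def using a unfolding K_def by auto
  next
    fix a b assume "a \<in> K" "b \<in> K"
    thus "a \<otimes> b \<in> K" unfolding K_def using rf(2) by auto
  qed
  have "derived_set G (carrier G) \<subseteq> K"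
  proof
    fix c assume "c \<in> derived_set G (carrier G)"
    then obtain a b where ab: "a \<in> carrier G" "b \<in> carrier G" "c = a \<otimes> b \<otimes> inv a \<otimes> inv b" by auto
    have ia: "inv a \<in> carrier G" and ib: "inv b \<in> carrier G" using ab by auto
    have "\<rho> c = \<rho> a * \<rho> b * \<rho> (inv a) * \<rho> (inv b)" using ab ia ib rf(2) by simp
    also have "\<rho> a * \<rho> b = \<rho> b * \<rho> a" using comm ab by auto
    also have "\<rho> b * \<rho> a * \<rho> (inv a) * \<rho> (inv b) = \<rho> b * (\<rho> a * \<rho> (inv a)) * \<rho> (inv b)"
      using rf(1)[OF ab(1)] rf(1)[OF ab(2)] rf(1)[OF ia] by (simp add: assoc_mult_mat[of _ n n _ n _ n])
    also have "\<dots> = 1\<^sub>m n" using rf(4)[OF ab(1)] rf(4)[OF ab(2)] rf(1)[OF ab(2)] by simp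
    finally show "c \<in> K" unfolding K_def using ab ia ib by auto
  qed
  hence "derived G (carrier G) \<subseteq> K" unfolding derived_def by (rule generate_subgroup_incl[OF _ sgK])
  thus ?thesis unfolding K_def by auto
qed

lemma kernel_comm:
  assumes rep: "is_rep G n \<rho>" and ker: "\<forall>c\<in>derived G (carrier G). \<rho> c = 1\<^sub>m n"
  shows "\<forall>x\<in>carrier G. \<forall>y\<in>carrier G. \<rho> x * \<rho> y = \<rho> y * \<rho> x"
proof (intro ballI)
  note rf = rep_facts[OF rep]
  fix x y assume x: "x \<in> carrier G" and y: "y \<in> carrier G"
  define c where "c = inv x \<otimes> inv y \<otimes> inv (inv x) \<otimes> inv (inv y)"
  have cd: "c \<in> derived G (carrier G)" unfolding derived_def c_def using x y
    by (intro generate.incl) blast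
  have cG: "c \<in> carrier G" unfolding c_def using x y by auto
  have "y \<otimes> x \<otimes> c = y \<otimes> (x \<otimes> inv x) \<otimes> (inv y \<otimes> (x \<otimes> y))" unfolding c_def using x y
    by (simp add: m_assoc) (metis inv_closed m_assoc m_closed r_inv l_one)
  also have "\<dots> = x \<otimes> y" using x y by (simp add: m_assoc[symmetric])
  finally have "y \<otimes> x \<otimes> c = x \<otimes> y" .
  hence "\<rho> x * \<rho> y = \<rho> (y \<otimes> x \<otimes> c)" using rf(2) x y by simp
  also have "\<dots> = \<rho> (y \<otimes> x) * 1\<^sub>m n" using rf(2) x y cG ker cd by simp
  also have "\<dots> = \<rho> (y \<otimes> x)" using rf(1)[of "y \<otimes> x"] x y by simp
  also have "\<dots> = \<rho> y * \<rho> x" using rf(2) x y by simp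
  finally show "\<rho> x * \<rho> y = \<rho> y * \<rho> x" .
qed

lemma scalar_tr_nonzero:
  assumes irr: "irr_rep G n \<rho>" and z: "z \<in> carrier G"
    and comm: "\<forall>x\<in>carrier G. \<rho> z * \<rho> x = \<rho> x * \<rho> z"
  shows "tr n \<rho> z \<noteq> 0"
proof -
  have rep: "is_rep G n \<rho>" and n0: "0 < n" using irr unfolding irr_rep_def by auto
  note rf = rep_facts[OF rep]
  obtain c where c: "\<forall>v\<in>carrier_vec n. \<rho> z *\<^sub>v v = c \<cdot>\<^sub>v v"
    using schur[OF irr rf(1)[OF z] comm] by blast
  have "tr n \<rho> z = (\<Sum>i<n. (\<rho> z *\<^sub>v unit_vec n i) $ i)"
    unfolding tr_def by (intro sum.cong refl entry_unit[OF rf(1)[OF z]]) auto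
  also have "\<dots> = (\<Sum>i<n. c)" using c by (intro sum.cong refl) simp
  also have "\<dots> = of_nat n * c" by simp
  finally have trz: "tr n \<rho> z = of_nat n * c" .
  have "c \<noteq> 0"
  proof
    assume c0: "c = 0"
    have e: "unit_vec n 0 \<in> carrier_vec n" by simp
    have "(\<rho> z * \<rho> (inv z)) *\<^sub>v unit_vec n 0 = \<rho> z *\<^sub>v (\<rho> (inv z) *\<^sub>v unit_vec n 0)"
      using rf(1)[OF z] rf(1)[OF inv_closed[OF z]] by (simp add: assoc_mult_mat_vec)
    also have "\<dots> = 0 \<cdot>\<^sub>v (\<rho> (inv z) *\<^sub>v unit_vec n 0)" using c c0 rf(1)[OF inv_closed[OF z]] by simp
    also have "\<dots> = 0\<^sub>v n" using rf(1)[OF inv_closed[OF z]] by (intro eq_vecI) auto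
    finally have "unit_vec n 0 = (0\<^sub>v n :: complex vec)" using rf(4)[OF z] by simp
    hence "unit_vec n 0 $ 0 = (0\<^sub>v n :: complex vec) $ 0" by simp
    thus False using n0 by simp
  qed
  thus ?thesis using trz n0 by simp
qed

lemma nonlinear_of_derived:
  assumes fin: "finite (carrier G)" and g: "g \<in> derived G (carrier G)" and g1: "g \<noteq> \<one>"
  shows "\<exists>n \<rho>. irr_rep G n \<rho> \<and> n \<noteq> 1 \<and> tr n \<rho> g \<noteq> 0"
proof -
  have gG: "g \<in> carrier G" using g derived_is_subgroup[of "carrier G"] subgroup.subset by blast
  obtain n \<rho> where r: "irr_rep G n \<rho>" "tr n \<rho> g \<noteq> 0" "tr n \<rho> g \<noteq> of_nat n"
    using key[OF fin one_is_normal gG] g1 by blast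
  have "n \<noteq> 1"
  proof
    assume n1: "n = 1"
    have rep: "is_rep G 1 \<rho>" using r n1 unfolding irr_rep_def by auto
    have "\<forall>x\<in>carrier G. \<forall>y\<in>carrier G. \<rho> x * \<rho> y = \<rho> y * \<rho> x"
      using mat11_comm rep_facts(1)[OF rep] by blast
    hence "\<rho> g = 1\<^sub>m 1" using comm_kernel[OF rep] g by blast
    hence "tr n \<rho> g = of_nat n" using n1 by (simp add: tr_def)
    with r show False by simp
  qed
  thus ?thesis using r by blast
qed

lemma center_subgroup: "subgroup (center G) G"
proof (rule subgroupI)
  show "center G \<subseteq> carrier G" unfolding center_def by auto
  show "center G \<noteq> {}" unfolding center_def by (auto intro!: exI[of _ \<one>])
next
  fix a assume a: "a \<in> center G"
  hence aG: "a \<in> carrier G" unfolding center_def by auto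
  show "inv a \<in> center G" unfolding center_def
  proof (intro CollectI conjI ballI)
    show "inv a \<in> carrier G" using aG by simp
    fix g assume g: "g \<in> carrier G"
    have ag: "a \<otimes> g = g \<otimes> a" using a g unfolding center_def by auto
    have "inv a \<otimes> g = inv a \<otimes> (g \<otimes> a) \<otimes> inv a" using aG g
      by (simp add: m_assoc)
    also have "\<dots> = inv a \<otimes> (a \<otimes> g) \<otimes> inv a" using ag by simp
    also have "\<dots> = g \<otimes> inv a" using aG g by (simp add: m_assoc[symmetric])
    finally show "inv a \<otimes> g = g \<otimes> inv a" .
  qed
next
  fix a b assume a: "a \<in> center G" and b: "b \<in> center G"
  have aG: "a \<in> carrier G" and bG: "b \<in> carrier G" using a b unfolding center_def by auto
  show "a \<otimes> b \<in> center G" unfolding center_def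
  proof (intro CollectI conjI ballI)
    show "a \<otimes> b \<in> carrier G" using aG bG by simp
    fix g assume g: "g \<in> carrier G"
    have ag: "a \<otimes> g = g \<otimes> a" and bg: "b \<otimes> g = g \<otimes> b" using a b g unfolding center_def by auto
    have "a \<otimes> b \<otimes> g = a \<otimes> (b \<otimes> g)" using aG bG g by (simp add: m_assoc)
    also have "\<dots> = a \<otimes> (g \<otimes> b)" using bg by simp
    also have "\<dots> = (a \<otimes> g) \<otimes> b" using aG bG g by (simp add: m_assoc)
    also have "\<dots> = (g \<otimes> a) \<otimes> b" using ag by simp
    also have "\<dots> = g \<otimes> (a \<otimes> b)" using aG bG g by (simp add: m_assoc)
    finally show "a \<otimes> b \<otimes> g = g \<otimes> (a \<otimes> b)" .
  qed
qed

lemma noncomm_elem: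
  assumes "\<not> comm_group G"
  shows "\<exists>x\<in>carrier G. \<exists>y\<in>carrier G. x \<otimes> y \<noteq> y \<otimes> x"
  using assms group_comm_groupI by blast

lemma main:
  assumes fin: "finite (carrier G)" and nab: "\<not> comm_group G"
  shows "U_grp G \<subseteq> derived G (carrier G) \<inter> center G \<and>
         derived G (carrier G) \<inter> center G \<subseteq> derived G (carrier G) <#> center G \<and>
         derived G (carrier G) <#> center G \<subseteq> V_grp G"
proof (intro conjI)
  let ?D = "derived G (carrier G)"
  have sgD: "subgroup ?D G" by (rule derived_is_subgroup, simp)
  have sgZ: "subgroup (center G) G" by (rule center_subgroup)
  obtain x0 y0 where xy0: "x0 \<in> carrier G" "y0 \<in> carrier G" "x0 \<otimes> y0 \<noteq> y0 \<otimes> x0"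
    using noncomm_elem[OF nab] by blast
  have x0Z: "x0 \<notin> center G" using xy0 unfolding center_def by auto
  show "?D \<inter> center G \<subseteq> ?D <#> center G"
  proof
    fix a assume a: "a \<in> ?D \<inter> center G"
    hence "a \<in> carrier G" using subgroup.subset[OF sgD] by auto
    hence "a = a \<otimes> \<one>" by simp
    moreover have "\<one> \<in> center G" using subgroup.one_closed[OF sgZ] .
    ultimately show "a \<in> ?D <#> center G" unfolding set_mult_def using a by blast
  qed
  define S where "S = {g \<in> carrier G. \<exists>\<chi>\<in>Irr G. \<chi> \<one> \<noteq> 1 \<and> \<chi> g \<noteq> 0}"
  have VS: "V_grp G = generate G S" unfolding V_grp_def S_def by simp
  have sgV: "subgroup (V_grp G) G" unfolding VS by (rule generate_is_subgroup, auto simp: S_def)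
  have nl: "\<And>n \<rho> g. irr_rep G n \<rho> \<Longrightarrow> n \<noteq> 1 \<Longrightarrow> g \<in> carrier G \<Longrightarrow> tr n \<rho> g \<noteq> 0 \<Longrightarrow> g \<in> V_grp G"
  proof -
    fix n \<rho> g assume r: "irr_rep G n \<rho>" "n \<noteq> 1" and g: "g \<in> carrier G" "tr n \<rho> g \<noteq> 0"
    have "is_rep G n \<rho>" using r unfolding irr_rep_def by auto
    hence "chi G n \<rho> \<one> = of_nat n" using rep_facts(3)[OF \<open>is_rep G n \<rho>\<close>] by (simp add: chi_def tr_def)
    hence "chi G n \<rho> \<one> \<noteq> 1" using r(2) by simp
    moreover have "chi G n \<rho> g \<noteq> 0" using g by (simp add: chi_def)
    ultimately have "g \<in> S" unfolding S_def using chi_Irr[OF r(1)] g by blast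
    thus "g \<in> V_grp G" unfolding VS by (rule generate.incl)
  qed
  have DV: "?D \<subseteq> V_grp G"
  proof
    fix g assume g: "g \<in> ?D"
    show "g \<in> V_grp G"
    proof (cases "g = \<one>")
      case True thus ?thesis unfolding VS by (simp add: generate.one)
    next
      case False
      then obtain n \<rho> where "irr_rep G n \<rho>" "n \<noteq> 1" "tr n \<rho> g \<noteq> 0"
        using nonlinear_of_derived[OF fin g] by blast
      thus ?thesis using nl g subgroup.subset[OF sgD] by blast
    qed
  qed
  define c0 where "c0 = x0 \<otimes> y0 \<otimes> inv x0 \<otimes> inv y0"
  have c0D: "c0 \<in> ?D" unfolding derived_def c0_def using xy0 by (intro generate.incl) blast
  have c01: "c0 \<noteq> \<one>"
  proof
    assume c1: "c0 = \<one>"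
    have "c0 \<otimes> (y0 \<otimes> x0) = x0 \<otimes> y0 \<otimes> inv x0 \<otimes> (inv y0 \<otimes> (y0 \<otimes> x0))"
      unfolding c0_def using xy0 by (simp add: m_assoc)
    also have "inv y0 \<otimes> (y0 \<otimes> x0) = x0" using xy0 by (simp add: m_assoc[symmetric])
    also have "x0 \<otimes> y0 \<otimes> inv x0 \<otimes> x0 = x0 \<otimes> y0" using xy0 by (simp add: m_assoc)
    finally have "c0 \<otimes> (y0 \<otimes> x0) = x0 \<otimes> y0" .
    hence "y0 \<otimes> x0 = x0 \<otimes> y0" using c1 xy0 by simp
    thus False using xy0(3) by simp
  qed
  obtain n0 \<rho>0 where r0: "irr_rep G n0 \<rho>0" "n0 \<noteq> 1"
    using nonlinear_of_derived[OF fin c0D c01] by blast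
  have ZV: "center G \<subseteq> V_grp G"
  proof
    fix z assume z: "z \<in> center G"
    hence zG: "z \<in> carrier G" unfolding center_def by auto
    have rep: "is_rep G n0 \<rho>0" using r0 unfolding irr_rep_def by auto
    have "\<forall>x\<in>carrier G. \<rho>0 z * \<rho>0 x = \<rho>0 x * \<rho>0 z"
    proof
      fix x assume x: "x \<in> carrier G"
      have "z \<otimes> x = x \<otimes> z" using z x unfolding center_def by auto
      have "\<rho>0 z * \<rho>0 x = \<rho>0 (z \<otimes> x)" using rep_facts(2)[OF rep x zG] rep_facts(2)[OF rep zG x] by simp
      also have "\<dots> = \<rho>0 (x \<otimes> z)" using \<open>z \<otimes> x = x \<otimes> z\<close> by simp
      also have "\<dots> = \<rho>0 x * \<rho>0 z" using rep_facts(2)[OF rep x zG] by simp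
      finally show "\<rho>0 z * \<rho>0 x = \<rho>0 x * \<rho>0 z" .
    qed
    hence "tr n0 \<rho>0 z \<noteq> 0" by (rule scalar_tr_nonzero[OF r0(1) zG])
    thus "z \<in> V_grp G" using nl[OF r0 zG] by simp
  qed
  show "?D <#> center G \<subseteq> V_grp G"
  proof
    fix a assume "a \<in> ?D <#> center G"
    then obtain d z where "d \<in> ?D" "z \<in> center G" "a = d \<otimes> z" unfolding set_mult_def by auto
    thus "a \<in> V_grp G" using DV ZV subgroup.m_closed[OF sgV] by blast
  qed
  have sgDZ: "subgroup (?D \<inter> center G) G" by (rule subgroups_Inter_pair[OF sgD sgZ])
  have Hsub: "\<And>H. H \<lhd> G \<Longrightarrow> V_rel G H \<subseteq> center G \<Longrightarrow> H \<subseteq> ?D \<inter> center G"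
  proof -
    fix H assume nH: "H \<lhd> G" and VZ: "V_rel G H \<subseteq> center G"
    have HG: "H \<subseteq> carrier G" using normal_imp_subgroup[OF nH] by (rule subgroup.subset)
    define T where "T = {g \<in> carrier G. \<exists>\<chi>\<in>Irr_rel G H. \<chi> g \<noteq> 0}"
    have VT: "V_rel G H = generate G T" unfolding V_rel_def T_def by simp
    have inrel: "\<And>n \<rho> h. irr_rep G n \<rho> \<Longrightarrow> h \<in> H \<Longrightarrow> tr n \<rho> h \<noteq> of_nat n \<Longrightarrow> chi G n \<rho> \<in> Irr_rel G H"
    proof -
      fix n \<rho> h assume r: "irr_rep G n \<rho>" and h: "h \<in> H" and t: "tr n \<rho> h \<noteq> of_nat n"
      have "is_rep G n \<rho>" using r unfolding irr_rep_def by auto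
      hence "chi G n \<rho> \<one> = of_nat n" using rep_facts(3)[OF \<open>is_rep G n \<rho>\<close>] by (simp add: chi_def tr_def)
      hence "h \<notin> char_kernel G (chi G n \<rho>)" using t h HG by (auto simp: char_kernel_def chi_def)
      thus "chi G n \<rho> \<in> Irr_rel G H" unfolding Irr_rel_def using chi_Irr[OF r] h by blast
    qed
    have HZ: "H \<subseteq> center G"
    proof
      fix h assume h: "h \<in> H"
      have hG: "h \<in> carrier G" using h HG by auto
      have "h \<in> V_rel G H"
      proof (cases "h = \<one>")
        case True thus ?thesis unfolding VT by (simp add: generate.one)
      next
        case False
        then obtain n \<rho> where r: "irr_rep G n \<rho>" "tr n \<rho> h \<noteq> 0" "tr n \<rho> h \<noteq> of_nat n"
          using key[OF fin one_is_normal hG] by blast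
        have "chi G n \<rho> \<in> Irr_rel G H" by (rule inrel[OF r(1) h r(3)])
        moreover have "chi G n \<rho> h \<noteq> 0" using r(2) hG by (simp add: chi_def)
        ultimately have "h \<in> T" unfolding T_def using hG by blast
        thus ?thesis unfolding VT by (rule generate.incl)
      qed
      thus "h \<in> center G" using VZ by auto
    qed
    have HD: "H \<subseteq> ?D"
    proof
      fix h assume h: "h \<in> H"
      have hG: "h \<in> carrier G" using h HG by auto
      show "h \<in> ?D"
      proof (rule ccontr)
        assume hD: "h \<notin> ?D"
        have nD: "?D \<lhd> G" by (rule derived_is_normal[OF normal_self])
        obtain n \<rho> where r: "irr_rep G n \<rho>" "\<forall>x\<in>?D. \<rho> x = 1\<^sub>m n" "tr n \<rho> h \<noteq> of_nat n"
          using key[OF fin nD hG hD] by blast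
        have rep: "is_rep G n \<rho>" using r unfolding irr_rep_def by auto
        have cm: "\<forall>x\<in>carrier G. \<forall>y\<in>carrier G. \<rho> x * \<rho> y = \<rho> y * \<rho> x"
          by (rule kernel_comm[OF rep r(2)])
        have "tr n \<rho> x0 \<noteq> 0" using scalar_tr_nonzero[OF r(1) xy0(1)] cm xy0(1) by blast
        hence "chi G n \<rho> x0 \<noteq> 0" using xy0 by (simp add: chi_def)
        hence "x0 \<in> T" unfolding T_def using inrel[OF r(1) h r(3)] xy0 by blast
        hence "x0 \<in> V_rel G H" unfolding VT by (rule generate.incl)
        thus False using VZ x0Z by auto
      qed
    qed
    show "H \<subseteq> ?D \<inter> center G" using HZ HD by auto
  qed
  show "U_grp G \<subseteq> ?D \<inter> center G"
    unfolding U_grp_def U_rel_def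
    by (rule generate_subgroup_incl[OF _ sgDZ], insert Hsub, blast)
qed

end

theorem lemma6p2:
  fixes G :: "('a, 'b) monoid_scheme"
  assumes "group G" and "finite (carrier G)" and "\<not> comm_group G"
  shows "U_grp G \<subseteq> derived G (carrier G) \<inter> center G \<and>
         derived G (carrier G) \<inter> center G \<subseteq> derived G (carrier G) <#>\<^bsub>G\<^esub> center G \<and>
         derived G (carrier G) <#>\<^bsub>G\<^esub> center G \<subseteq> V_grp G"
  using group.main[OF assms] .

end
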